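(* Let $p$ be a prime and $n\ge1$, and suppose $p^n-1=st$ with positive integers $s<t$ and $\gcd(s,t)=1$. Let $\alpha$ be a generator of $\mathbb{F}_{p^n}^\times$, $\beta=\alpha^t$, $\gamma=\alpha^s$. Let $S_1,S_2\subset\mathbb{Z}_s\times\mathbb{Z}_t$ be two disjoint linearly independent patterns, of sizes $m_1$ and $m_2$ respectively, and let $V_1,V_2\subset\mathbb{F}_{p^n}$ be the $\mathbb{F}_p$-spans of $A|_{S_1}$ and $A|_{S_2}$. Suppose $\dim_{\mathbb{F}_p}V_1+\dim_{\mathbb{F}_p}V_2\le n$. Then there exists $(a,b)\in\mathbb{Z}_s\times\mathbb{Z}_t$ such that $T_{a,b}(S_2)$ is disjoint from $S_1$ and the pattern $S_1\cup T_{a,b}(S_2)$ is linearly independent.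
   Context: $\mathbb{Z}_s=\mathbb{Z}/s\mathbb{Z}$, $\mathbb{Z}_t=\mathbb{Z}/t\mathbb{Z}$; $(i,j)\mapsto\beta^i\gamma^j$ is a well-defined bijection $\mathbb{Z}_s\times\mathbb{Z}_t\to\mathbb{F}_{p^n}^\times$. A pattern is a subset $S\subset\mathbb{Z}_s\times\mathbb{Z}_t$, and $A|_S=\{\beta^i\gamma^j:(i,j)\in S\}$. $S$ is a linearly independent pattern if the $|S|$ elements of $A|_S$ are linearly independent over $\mathbb{F}_p$. The toroidal translation $T_{a,b}:\mathbb{Z}_s\times\mathbb{Z}_t\to\mathbb{Z}_s\times\mathbb{Z}_t$ is $T_{a,b}(i,j)=(i+a \bmod s,\ j+b\bmod t)$. *)

theory Defs
  imports "HOL-Computational_Algebra.Primes"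
begin

text \<open>Linear algebra over the prime field F_p inside a field of characteristic p:
  the scalars of F_p are the elements of_nat c with c < p.\<close>

definition Fp_indep_set :: "nat \<Rightarrow> 'a::field set \<Rightarrow> bool" where
  "Fp_indep_set p X \<longleftrightarrow> finite X \<and>
     (\<forall>c :: 'a \<Rightarrow> nat. (\<forall>x\<in>X. c x < p) \<longrightarrow> (\<Sum>x\<in>X. of_nat (c x) * x) = 0 \<longrightarrow> (\<forall>x\<in>X. c x = 0))"

definition Fp_span :: "nat \<Rightarrow> 'a::field set \<Rightarrow> 'a set" where
  "Fp_span p X = {y. \<exists>c :: 'a \<Rightarrow> nat. (\<forall>x\<in>X. c x < p) \<and> y = (\<Sum>x\<in>X. of_nat (c x) * x)}"

definition Fp_dim :: "nat \<Rightarrow> 'a::field set \<Rightarrow> nat" where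
  "Fp_dim p V = Max (card ` {B. B \<subseteq> V \<and> Fp_indep_set p B})"

text \<open>Z_s x Z_t represented as {0..<s} x {0..<t}; the element attached to (i,j) is beta^i gamma^j.\<close>
definition pat_elt :: "'a::field \<Rightarrow> 'a \<Rightarrow> nat \<times> nat \<Rightarrow> 'a" where
  "pat_elt \<beta> \<gamma> q = \<beta> ^ fst q * \<gamma> ^ snd q"

definition A_restr :: "'a::field \<Rightarrow> 'a \<Rightarrow> (nat \<times> nat) set \<Rightarrow> 'a set" where
  "A_restr \<beta> \<gamma> S = pat_elt \<beta> \<gamma> ` S"

definition lin_indep_pattern :: "nat \<Rightarrow> 'a::field \<Rightarrow> 'a \<Rightarrow> (nat \<times> nat) set \<Rightarrow> bool" where
  "lin_indep_pattern p \<beta> \<gamma> S \<longleftrightarrow> finite S \<and>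
     (\<forall>c :: nat \<times> nat \<Rightarrow> nat. (\<forall>q\<in>S. c q < p) \<longrightarrow>
        (\<Sum>q\<in>S. of_nat (c q) * pat_elt \<beta> \<gamma> q) = 0 \<longrightarrow> (\<forall>q\<in>S. c q = 0))"

definition tor_trans :: "nat \<Rightarrow> nat \<Rightarrow> nat \<Rightarrow> nat \<Rightarrow> nat \<times> nat \<Rightarrow> nat \<times> nat" where
  "tor_trans s t a b q = ((fst q + a) mod s, (snd q + b) mod t)"

end

theory Submission
  imports Defs "HOL-Library.FuncSet" "HOL-Number_Theory.Cong"
begin

lemma card_char0: "of_nat (card (UNIV::'a::{finite,ring_1} set)) = (0::'a)"
proof -
  have "(\<Sum>x\<in>UNIV. x + 1) = (\<Sum>x\<in>UNIV. (x::'a))"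
    by (rule sum.reindex_bij_witness[of _ "\<lambda>x. x - 1" "\<lambda>x. x + 1"]) auto
  hence "(\<Sum>x\<in>UNIV. (x::'a)) + (\<Sum>x\<in>(UNIV::'a set). 1) = (\<Sum>x\<in>UNIV. (x::'a))"
    by (simp add: sum.distrib)
  thus ?thesis by simp
qed

lemma field_pow_card: fixes \<alpha> :: "'a::{finite,field}" assumes "\<alpha> \<noteq> 0"
  shows "\<alpha> ^ (card (UNIV::'a set) - 1) = 1"
proof -
  let ?Z = "UNIV - {0::'a}"
  have "(\<Prod>x\<in>?Z. \<alpha> * x) = (\<Prod>x\<in>?Z. x)"
    by (rule prod.reindex_bij_witness[of _ "\<lambda>x. x / \<alpha>" "\<lambda>x. \<alpha> * x"]) (auto simp: assms)
  moreover have "(\<Prod>x\<in>?Z. \<alpha> * x) = \<alpha> ^ card ?Z * (\<Prod>x\<in>?Z. x)"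
    by (simp add: prod.distrib)
  moreover have "(\<Prod>x\<in>?Z. x) \<noteq> 0" by simp
  moreover have "card ?Z = card (UNIV::'a set) - 1" by (simp add: card_Diff_singleton)
  ultimately show ?thesis by simp
qed

lemma pow_mod_eq: fixes x :: "'a::monoid_mult" assumes "x ^ s = 1"
  shows "x ^ (k mod s) = x ^ k"
proof -
  have "x ^ k = x ^ (s * (k div s) + k mod s)" by simp
  also have "\<dots> = (x ^ s) ^ (k div s) * x ^ (k mod s)" by (simp only: power_add power_mult)
  finally show ?thesis using assms by simp
qed

lemma inj_from_indep:
  fixes \<beta> \<gamma> :: "'a::field"
  assumes "lin_indep_pattern p \<beta> \<gamma> S" "of_nat p = (0::'a)" "prime p"
  shows "inj_on (pat_elt \<beta> \<gamma>) S"
proof (rule inj_onI, rule ccontr)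
  fix q q' assume qS: "q \<in> S" "q' \<in> S" and eq: "pat_elt \<beta> \<gamma> q = pat_elt \<beta> \<gamma> q'" and ne: "q \<noteq> q'"
  have p1: "1 < p" using assms(3) prime_gt_1_nat by blast
  define c where "c = (\<lambda>r. if r = q then 1 else if r = q' then p - 1 else (0::nat))"
  have "\<And>r. of_nat (c r) * pat_elt \<beta> \<gamma> r = (if r = q then pat_elt \<beta> \<gamma> q else 0)
      + (if r = q' then of_nat (p - 1) * pat_elt \<beta> \<gamma> q' else 0)"
    using ne by (auto simp: c_def)
  hence "(\<Sum>r\<in>S. of_nat (c r) * pat_elt \<beta> \<gamma> r) = pat_elt \<beta> \<gamma> q + of_nat (p - 1) * pat_elt \<beta> \<gamma> q'"
    using qS assms(1) by (simp add: sum.distrib lin_indep_pattern_def)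
  also have "\<dots> = of_nat (1 + (p - 1)) * pat_elt \<beta> \<gamma> q" using eq by (simp add: algebra_simps)
  also have "\<dots> = 0" using p1 assms(2) by simp
  finally have sum0: "(\<Sum>r\<in>S. of_nat (c r) * pat_elt \<beta> \<gamma> r) = 0" .
  have "\<forall>r\<in>S. c r < p" using p1 by (auto simp: c_def)
  then have "c q = 0" using sum0 assms(1) qS unfolding lin_indep_pattern_def by blast
  then show False by (simp add: c_def)
qed

lemma dim_ge:
  fixes \<beta> \<gamma> :: "'a::{finite,field}"
  assumes "lin_indep_pattern p \<beta> \<gamma> S" "inj_on (pat_elt \<beta> \<gamma>) S" "1 < p"
  shows "card S \<le> Fp_dim p (Fp_span p (A_restr \<beta> \<gamma> S))"
proof -
  let ?e = "pat_elt \<beta> \<gamma>"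
  have fin: "finite S" using assms(1) by (simp add: lin_indep_pattern_def)
  have ind: "Fp_indep_set p (?e ` S)"
    unfolding Fp_indep_set_def
  proof (intro conjI allI impI)
    show "finite (?e ` S)" using fin by simp
    fix c :: "'a \<Rightarrow> nat" assume c: "\<forall>x\<in>?e ` S. c x < p" and s0: "(\<Sum>x\<in>?e ` S. of_nat (c x) * x) = 0"
    have "(\<Sum>x\<in>?e ` S. of_nat (c x) * x) = (\<Sum>q\<in>S. of_nat ((c \<circ> ?e) q) * ?e q)"
      using assms(2) by (simp add: sum.reindex)
    with s0 have "(\<Sum>q\<in>S. of_nat ((c \<circ> ?e) q) * ?e q) = 0" by simp
    moreover have "\<forall>q\<in>S. (c \<circ> ?e) q < p" using c by simp
    ultimately have "\<forall>q\<in>S. (c \<circ> ?e) q = 0" using assms(1) unfolding lin_indep_pattern_def by blast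
    thus "\<forall>x\<in>?e ` S. c x = 0" by auto
  qed
  have sub: "?e ` S \<subseteq> Fp_span p (A_restr \<beta> \<gamma> S)"
  proof
    fix y assume y: "y \<in> ?e ` S"
    define c where "c = (\<lambda>x. if x = y then 1 else (0::nat))"
    have "(\<Sum>x\<in>?e ` S. of_nat (c x) * x) = (\<Sum>x\<in>?e ` S. if x = y then x else 0)"
      by (rule sum.cong) (auto simp: c_def)
    also have "\<dots> = y" using y fin by (simp add: sum.delta)
    finally have "(\<Sum>x\<in>?e ` S. of_nat (c x) * x) = y" .
    moreover have "\<forall>x\<in>?e ` S. c x < p" using assms(3) by (simp add: c_def)
    ultimately show "y \<in> Fp_span p (A_restr \<beta> \<gamma> S)"
      unfolding Fp_span_def A_restr_def by force
  qed
  have "card (?e ` S) \<in> card ` {B. B \<subseteq> Fp_span p (A_restr \<beta> \<gamma> S) \<and> Fp_indep_set p B}"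
    using ind sub by blast
  hence "card (?e ` S) \<le> Fp_dim p (Fp_span p (A_restr \<beta> \<gamma> S))"
    unfolding Fp_dim_def by (intro Max_ge) auto
  thus ?thesis using assms(2) by (simp add: card_image)
qed

definition combs :: "nat \<Rightarrow> 'a::field \<Rightarrow> 'a \<Rightarrow> (nat \<times> nat) set \<Rightarrow> 'a set" where
  "combs p \<beta> \<gamma> S = (\<lambda>c. \<Sum>q\<in>S. of_nat (c q) * pat_elt \<beta> \<gamma> q) ` (S \<rightarrow>\<^sub>E {..<p})"

lemma combs_mem:
  assumes "\<forall>q\<in>S. c q < p"
  shows "(\<Sum>q\<in>S. of_nat (c q) * pat_elt \<beta> \<gamma> q) \<in> combs p \<beta> \<gamma> S"
  unfolding combs_def
  by (rule image_eqI[of _ _ "restrict c S"]) (use assms in \<open>auto intro: sum.cong\<close>)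

lemma combs_card:
  assumes "finite S" shows "card (combs p \<beta> \<gamma> S) \<le> p ^ card S"
proof -
  have "card (combs p \<beta> \<gamma> S) \<le> card (S \<rightarrow>\<^sub>E {..<p})"
    unfolding combs_def by (rule card_image_le) (simp add: assms finite_PiE)
  also have "\<dots> = p ^ card S" using assms by (simp add: card_PiE)
  finally show ?thesis .
qed

lemma combs_elim:
  assumes "u \<in> combs p \<beta> \<gamma> S"
  obtains c where "\<forall>q\<in>S. c q < p" "u = (\<Sum>q\<in>S. of_nat (c q) * pat_elt \<beta> \<gamma> q)"
  using assms unfolding combs_def by (auto simp: PiE_iff)

lemma mod_add_inj:
  fixes i i' a s :: nat
  assumes "(i + a) mod s = (i' + a) mod s" "i < s" "i' < s"
  shows "i = i'"
proof -
  have "[i + a = i' + a] (mod s)" using assms(1) by (simp add: cong_def)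
  hence "[i = i'] (mod s)" by (simp add: cong_add_rcancel_nat)
  thus ?thesis using assms(2,3) by (simp add: cong_def)
qed

theorem mainTheorem3:
  fixes p n s t :: nat and \<alpha> :: "'a::{finite,field}"
    and S1 S2 :: "(nat \<times> nat) set"
  assumes "prime p" and "n \<ge> 1" and "card (UNIV :: 'a set) = p ^ n"
    and "p ^ n - 1 = s * t" and "0 < s" and "s < t" and "coprime s t"
    and "\<alpha> \<noteq> 0" and "\<forall>x::'a. x \<noteq> 0 \<longrightarrow> (\<exists>k::nat. x = \<alpha> ^ k)"
    and "S1 \<subseteq> {0..<s} \<times> {0..<t}" and "S2 \<subseteq> {0..<s} \<times> {0..<t}"
    and "S1 \<inter> S2 = {}"
    and "lin_indep_pattern p (\<alpha> ^ t) (\<alpha> ^ s) S1"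
    and "lin_indep_pattern p (\<alpha> ^ t) (\<alpha> ^ s) S2"
    and "Fp_dim p (Fp_span p (A_restr (\<alpha> ^ t) (\<alpha> ^ s) S1))
         + Fp_dim p (Fp_span p (A_restr (\<alpha> ^ t) (\<alpha> ^ s) S2)) \<le> n"
  shows "\<exists>a<s. \<exists>b<t. tor_trans s t a b ` S2 \<inter> S1 = {} \<and>
           lin_indep_pattern p (\<alpha> ^ t) (\<alpha> ^ s) (S1 \<union> tor_trans s t a b ` S2)"
proof -
  let ?\<beta> = "\<alpha> ^ t" and ?\<gamma> = "\<alpha> ^ s"
  let ?e = "pat_elt (\<alpha> ^ t) (\<alpha> ^ s)"
  have p1: "1 < p" using assms(1) prime_gt_1_nat by blast
  have charp: "of_nat p = (0::'a)"
  proof -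
    have "of_nat (p ^ n) = (0::'a)" using card_char0[where 'a='a] assms(3) by simp
    hence "(of_nat p :: 'a) ^ n = 0" by simp
    thus ?thesis by simp
  qed
  have a1: "\<alpha> ^ (s * t) = 1" using field_pow_card[OF assms(8)] assms(3,4) by simp
  have b1: "?\<beta> ^ s = 1" using a1 by (simp add: power_mult[symmetric] mult.commute)
  have g1: "?\<gamma> ^ t = 1" using a1 by (simp add: power_mult[symmetric])
  have enz: "\<And>q. ?e q \<noteq> 0" using assms(8) by (simp add: pat_elt_def)
  have fin1: "finite S1" using assms(13) by (simp add: lin_indep_pattern_def)
  have fin2: "finite S2" using assms(14) by (simp add: lin_indep_pattern_def)
  have inj1: "inj_on ?e S1" by (rule inj_from_indep[OF assms(13) charp assms(1)])
  have inj2: "inj_on ?e S2" by (rule inj_from_indep[OF assms(14) charp assms(1)])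
  have m: "card S1 + card S2 \<le> n"
    using dim_ge[OF assms(13) inj1 p1] dim_ge[OF assms(14) inj2 p1] assms(15) by linarith
  define U1 where "U1 = combs p ?\<beta> ?\<gamma> S1"
  define U2 where "U2 = combs p ?\<beta> ?\<gamma> S2"
  define Bad where "Bad = {l::'a. l \<noteq> 0 \<and> (\<exists>u\<in>U1. \<exists>w\<in>U2. u + l * w = 0 \<and> (u \<noteq> 0 \<or> w \<noteq> 0))}"
  have Bsub: "Bad \<subseteq> (%(u,w). - u / w) ` ((U1 - {0}) \<times> (U2 - {0}))"
  proof
    fix l assume "l \<in> Bad"
    then obtain u w where l0: "l \<noteq> 0" and uw: "u \<in> U1" "w \<in> U2" "u + l * w = 0" "u \<noteq> 0 \<or> w \<noteq> 0"
      unfolding Bad_def by blast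
    have w0: "w \<noteq> 0" using uw by auto
    have u0: "u \<noteq> 0" using uw(3) w0 l0 by auto
    have "l = - u / w" using uw(3) w0 by (simp add: field_simps add_eq_0_iff)
    thus "l \<in> (%(u,w). - u / w) ` ((U1 - {0}) \<times> (U2 - {0}))"
      using uw u0 w0 by (intro rev_image_eqI[of "(u,w)"]) auto
  qed
  have z1: "0 \<in> U1" using combs_mem[of S1 "%_. 0" p ?\<beta> ?\<gamma>] p1 by (simp add: U1_def)
  have z2: "0 \<in> U2" using combs_mem[of S2 "%_. 0" p ?\<beta> ?\<gamma>] p1 by (simp add: U2_def)
  have c1: "card U1 \<le> p ^ card S1" unfolding U1_def by (rule combs_card[OF fin1])
  have c2: "card U2 \<le> p ^ card S2" unfolding U2_def by (rule combs_card[OF fin2])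
  have "card Bad \<le> card ((U1 - {0}) \<times> (U2 - {0}))"
    using card_mono[OF _ Bsub] card_image_le[of "(U1 - {0}) \<times> (U2 - {0})" "%(u,w). - u / w"]
    by simp
  also have "\<dots> = (card U1 - 1) * (card U2 - 1)"
    using z1 z2 by (simp add: card_cartesian_product card_Diff_singleton)
  also have "\<dots> \<le> (p ^ card S1 - 1) * (p ^ card S2 - 1)"
    using c1 c2 by (intro mult_le_mono) auto
  also have "\<dots> < p ^ n - 1"
  proof -
    have pn: "p ^ card S1 * p ^ card S2 \<le> p ^ n"
      using m p1 by (simp add: power_add[symmetric] power_increasing)
    have "p ^ 1 \<le> p ^ n" by (rule power_increasing) (use assms(2) p1 in auto)
    hence pn2: "2 \<le> p ^ n" using p1 by simp
    show ?thesis
    proof (cases "card S1 = 0 \<or> card S2 = 0")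
      case True thus ?thesis using pn2 by auto
    next
      case False
      have "p ^ 1 \<le> p ^ card S1" by (rule power_increasing) (use False p1 in auto)
      hence "2 \<le> p ^ card S1" using p1 by simp
      then obtain A where A: "p ^ card S1 = A + 2" by (metis le_add_diff_inverse2)
      have "p ^ 1 \<le> p ^ card S2" by (rule power_increasing) (use False p1 in auto)
      hence "2 \<le> p ^ card S2" using p1 by simp
      then obtain B where B: "p ^ card S2 = B + 2" by (metis le_add_diff_inverse2)
      have "(A + 1) * (B + 1) < (A + 2) * (B + 2) - 1" by (simp add: algebra_simps)
      thus ?thesis using pn A B by simp
    qed
  qed
  also have "\<dots> = card (UNIV - {0::'a})" using assms(3) by (simp add: card_Diff_singleton)
  finally have "card Bad < card (UNIV - {0::'a})" .
  hence "\<not> (UNIV - {0::'a}) \<subseteq> Bad" using card_mono[of Bad "UNIV - {0::'a}"] by auto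
  then obtain l where l0: "l \<noteq> 0" and lB: "l \<notin> Bad" by blast
  have good: "\<And>u w. u \<in> U1 \<Longrightarrow> w \<in> U2 \<Longrightarrow> u + l * w = 0 \<Longrightarrow> u = 0 \<and> w = 0"
    using lB l0 unfolding Bad_def by blast
  obtain k where k: "l = \<alpha> ^ k" using assms(9) l0 by blast
  have t0: "t \<noteq> 0" using assms(5,6) by simp
  have gcd1: "gcd t s = 1" using assms(7) by (simp add: coprime_iff_gcd_eq_1 gcd.commute)
  obtain x y where xy: "t * x = s * y + 1" using bezout_nat[OF t0, of s] gcd1 by auto
  have gy: "?\<gamma> ^ y \<noteq> 0" using assms(8) by simp
  have "?\<beta> ^ x * ?\<gamma> ^ ((t - 1) * y) * ?\<gamma> ^ y = ?\<beta> ^ x * ?\<gamma> ^ ((t - 1) * y + y)"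
    by (simp add: power_add mult.assoc)
  also have "(t - 1) * y + y = t * y" using t0 by (cases t) auto
  also have "?\<gamma> ^ (t * y) = 1" using g1 by (simp add: power_mult)
  also have "?\<beta> ^ x * 1 = \<alpha> ^ (t * x)" by (simp add: power_mult)
  also have "\<dots> = \<alpha> * ?\<gamma> ^ y" using xy by (simp add: power_mult power_add)
  finally have "?\<beta> ^ x * ?\<gamma> ^ ((t - 1) * y) = \<alpha>" using gy assms(8) by auto
  hence lxk: "l = ?\<beta> ^ (x * k) * ?\<gamma> ^ ((t - 1) * y * k)"
    using k by (metis power_mult power_mult_distrib)
  define a where "a = (x * k) mod s"
  define b where "b = ((t - 1) * y * k) mod t"
  have as: "a < s" using assms(5) by (simp add: a_def)
  have bt: "b < t" using t0 by (simp add: b_def)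
  have lam: "l = ?\<beta> ^ a * ?\<gamma> ^ b"
    unfolding a_def b_def using lxk pow_mod_eq[OF b1] pow_mod_eq[OF g1] by simp
  have eT: "\<And>q. ?e (tor_trans s t a b q) = l * ?e q"
  proof -
    fix q :: "nat \<times> nat"
    have "?e (tor_trans s t a b q) = ?\<beta> ^ (fst q + a) * ?\<gamma> ^ (snd q + b)"
      unfolding pat_elt_def tor_trans_def using pow_mod_eq[OF b1] pow_mod_eq[OF g1] by simp
    also have "\<dots> = l * ?e q" unfolding lam pat_elt_def by (simp add: power_add mult_ac)
    finally show "?e (tor_trans s t a b q) = l * ?e q" .
  qed
  have injT: "inj_on (tor_trans s t a b) S2"
  proof (rule inj_onI)
    fix q q' assume "q \<in> S2" "q' \<in> S2" "tor_trans s t a b q = tor_trans s t a b q'"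
    moreover have h: "q \<in> {0..<s} \<times> {0..<t}" "q' \<in> {0..<s} \<times> {0..<t}"
      using assms(11) calculation(1,2) by blast+
    moreover have "fst q < s" "snd q < t" "fst q' < s" "snd q' < t"
      using h by (auto simp: mem_Times_iff)
    ultimately show "q = q'" using mod_add_inj[of "fst q" a s "fst q'"] mod_add_inj[of "snd q" b t "snd q'"]
      by (auto simp: tor_trans_def prod_eq_iff)
  qed
  have disj: "tor_trans s t a b ` S2 \<inter> S1 = {}"
  proof (rule ccontr)
    assume "tor_trans s t a b ` S2 \<inter> S1 \<noteq> {}"
    then obtain q2 where q2: "q2 \<in> S2" "tor_trans s t a b q2 \<in> S1" by blast
    let ?q1 = "tor_trans s t a b q2"
    have "(\<Sum>r\<in>S1. of_nat (if r = ?q1 then 1 else 0) * ?e r) = (\<Sum>r\<in>S1. if r = ?q1 then ?e r else 0)"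
      by (rule sum.cong) auto
    also have "\<dots> = ?e ?q1" using q2 fin1 by (simp add: sum.delta)
    finally have "?e ?q1 \<in> U1" unfolding U1_def
      using combs_mem[of S1 "%r. if r = ?q1 then 1 else 0" p ?\<beta> ?\<gamma>] p1 by auto
    have "(\<Sum>r\<in>S2. of_nat (if r = q2 then p - 1 else 0) * ?e r)
        = (\<Sum>r\<in>S2. if r = q2 then of_nat (p - 1) * ?e r else 0)"
      by (rule sum.cong) auto
    also have "\<dots> = of_nat (p - 1) * ?e q2" using q2 fin2 by (simp add: sum.delta)
    also have "\<dots> = - ?e q2" using p1 charp by (simp add: of_nat_diff)
    finally have "- ?e q2 \<in> U2" unfolding U2_def
      using combs_mem[of S2 "%r. if r = q2 then p - 1 else 0" p ?\<beta> ?\<gamma>] p1 by auto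
    have "?e ?q1 + l * (- ?e q2) = 0" using eT by simp
    hence "?e ?q1 = 0" using good \<open>?e ?q1 \<in> U1\<close> \<open>- ?e q2 \<in> U2\<close> by blast
    thus False using enz by blast
  qed
  have indep: "lin_indep_pattern p ?\<beta> ?\<gamma> (S1 \<union> tor_trans s t a b ` S2)"
    unfolding lin_indep_pattern_def
  proof (intro conjI allI impI)
    show "finite (S1 \<union> tor_trans s t a b ` S2)" using fin1 fin2 by simp
    fix c :: "nat \<times> nat \<Rightarrow> nat"
    assume cp: "\<forall>q\<in>S1 \<union> tor_trans s t a b ` S2. c q < p"
      and s0: "(\<Sum>q\<in>S1 \<union> tor_trans s t a b ` S2. of_nat (c q) * ?e q) = 0"
    let ?u = "\<Sum>q\<in>S1. of_nat (c q) * ?e q"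
    let ?w = "\<Sum>q\<in>S2. of_nat (c (tor_trans s t a b q)) * ?e q"
    have "(\<Sum>q\<in>tor_trans s t a b ` S2. of_nat (c q) * ?e q)
        = (\<Sum>q\<in>S2. of_nat (c (tor_trans s t a b q)) * ?e (tor_trans s t a b q))"
      using injT by (simp add: sum.reindex)
    also have "\<dots> = l * ?w" using eT by (simp add: sum_distrib_left mult_ac)
    finally have T2: "(\<Sum>q\<in>tor_trans s t a b ` S2. of_nat (c q) * ?e q) = l * ?w" .
    have "(\<Sum>q\<in>S1 \<union> tor_trans s t a b ` S2. of_nat (c q) * ?e q) = ?u +
       (\<Sum>q\<in>tor_trans s t a b ` S2. of_nat (c q) * ?e q)"
      by (rule sum.union_disjoint) (use fin1 fin2 disj in auto)
    hence "(\<Sum>q\<in>S1 \<union> tor_trans s t a b ` S2. of_nat (c q) * ?e q) = ?u + l * ?w"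
      using T2 by simp
    hence uw0: "?u + l * ?w = 0" using s0 by simp
    have "?u \<in> U1" unfolding U1_def by (rule combs_mem) (use cp in auto)
    moreover have "?w \<in> U2" unfolding U2_def by (rule combs_mem) (use cp in auto)
    ultimately have "?u = 0" "?w = 0" using good uw0 by auto
    have z1: "\<forall>q\<in>S1. c q = 0"
      using assms(13) cp \<open>?u = 0\<close> unfolding lin_indep_pattern_def by auto
    have z2: "\<forall>q\<in>S2. c (tor_trans s t a b q) = 0"
    proof -
      have L: "\<forall>c'. (\<forall>q\<in>S2. c' q < p) \<longrightarrow> (\<Sum>q\<in>S2. of_nat (c' q) * ?e q) = 0 \<longrightarrow> (\<forall>q\<in>S2. c' q = 0)"
        using assms(14) unfolding lin_indep_pattern_def by blast
      have "\<forall>q\<in>S2. c (tor_trans s t a b q) < p" using cp by auto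
      thus ?thesis using spec[OF L, of "\<lambda>q. c (tor_trans s t a b q)"] \<open>?w = 0\<close> by simp
    qed
    show "\<forall>q\<in>S1 \<union> tor_trans s t a b ` S2. c q = 0" using z1 z2 by auto
  qed
  show ?thesis using as bt disj indep by blast
qed

end
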